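(* For every $s\in(0,1)$ and $p>1$, the function $u_{s,p}(x):=(1-|x|^{m})^s_+$, $x\in\mathbb R$, with $m=\frac{p}{p-1}$, belongs to $W^{s,p}(\mathbb R)$, i.e. $u_{s,p}\in L^p(\mathbb R)$ and $\int_{\mathbb R}\int_{\mathbb R}\frac{|u_{s,p}(x)-u_{s,p}(y)|^p}{|x-y|^{1+sp}}dx\,dy<\infty$.
   Context: $(a)_+=\max\{a,0\}$. *)

theory Defs
  imports "HOL-Analysis.Analysis"
begin

definition pos_part :: "real \<Rightarrow> real" where
  "pos_part a = max a 0"

definition u_sp :: "real \<Rightarrow> real \<Rightarrow> real \<Rightarrow> real" where
  "u_sp s p x = (pos_part (1 - \<bar>x\<bar> powr (p / (p - 1)))) powr s"

definition in_Wsp :: "real \<Rightarrow> real \<Rightarrow> (real \<Rightarrow> real) \<Rightarrow> bool" where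
  "in_Wsp s p u \<longleftrightarrow>
     u \<in> borel_measurable lborel \<and>
     integrable lborel (\<lambda>x. \<bar>u x\<bar> powr p) \<and>
     (\<integral>\<^sup>+ x. (\<integral>\<^sup>+ y. ennreal (\<bar>u x - u y\<bar> powr p / \<bar>x - y\<bar> powr (1 + s * p)) \<partial>lborel) \<partial>lborel) < \<infinity>"

end

theory Submission
  imports Defs
begin

lemma pow_lip:
  fixes a b m :: real
  assumes "0 \<le> a" "a \<le> b" "b \<le> 1" "1 \<le> m"
  shows "b powr m - a powr m \<le> m * (b - a)"
proof (cases "a = 0")
  case True
  have "b powr m \<le> b" using assms by (cases "b = 0") (auto intro: powr_le_one_le)
  also have "\<dots> \<le> m * b" using assms by (simp add: mult_le_cancel_right1)
  finally show ?thesis using True assms by simp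
next
  case False
  show ?thesis
  proof (cases "a = b")
    case True then show ?thesis by simp
  next
    case False
    hence ab: "a < b" using assms by simp
    have "\<exists>z. a < z \<and> z < b \<and> b powr m - a powr m = (b - a) * (m * z powr (m - 1))"
      by (rule MVT2[OF ab]) (use \<open>a \<noteq> 0\<close> assms in \<open>auto intro!: has_real_derivative_powr\<close>)
    then obtain z where z: "a < z" "z < b" "b powr m - a powr m = (b - a) * (m * z powr (m - 1))" by blast
    have "z powr (m - 1) \<le> 1" using z assms by (intro powr_le1) auto
    hence "m * z powr (m - 1) \<le> m" using assms by (simp add: mult_le_cancel_left1)
    thus ?thesis using z ab by (simp add: mult_left_mono mult.commute)
  qed
qed

lemma pow_s:
  fixes A B s :: real
  assumes "0 \<le> B" "B \<le> A" "0 < A" "0 < s" "s < 1"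
  shows "A powr s - B powr s \<le> (A - B) * A powr (s - 1)"
    and "A powr s - B powr s \<le> (A - B) powr s"
proof -
  have "B * A powr (s - 1) \<le> B powr s"
  proof (cases "B = 0")
    case False
    hence "A powr (s - 1) \<le> B powr (s - 1)" using assms by (intro powr_mono2') auto
    hence "B * A powr (s - 1) \<le> B * B powr (s - 1)" using assms by (intro mult_left_mono) auto
    also have "\<dots> = B powr s" using False assms by (simp add: powr_mult_base)
    finally show ?thesis .
  qed simp
  moreover have "A * A powr (s - 1) = A powr s" using assms by (simp add: powr_mult_base)
  ultimately show 1: "A powr s - B powr s \<le> (A - B) * A powr (s - 1)" by (simp add: algebra_simps)
  show "A powr s - B powr s \<le> (A - B) powr s"
  proof (cases "A = B")
    case False
    hence "A powr (s - 1) \<le> (A - B) powr (s - 1)" using assms by (intro powr_mono2') auto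
    hence "(A - B) * A powr (s - 1) \<le> (A - B) * (A - B) powr (s - 1)" using assms by (intro mult_left_mono) auto
    also have "\<dots> = (A - B) powr s" using False assms by (simp add: powr_mult_base)
    finally show ?thesis using 1 by simp
  qed simp
qed

lemma u_alt: "u_sp s p x = (1 - min \<bar>x\<bar> 1 powr (p / (p - 1))) powr s" if "1 < p"
proof -
  have "pos_part (1 - \<bar>x\<bar> powr (p / (p - 1))) = 1 - min \<bar>x\<bar> 1 powr (p / (p - 1))"
  proof (cases "\<bar>x\<bar> \<le> 1")
    case True
    hence "\<bar>x\<bar> powr (p / (p - 1)) \<le> 1" using that by (intro powr_le1) auto
    then show ?thesis using True by (simp add: pos_part_def)
  next
    case False
    hence "1 \<le> \<bar>x\<bar> powr (p / (p - 1))" using that by (intro ge_one_powr_ge_zero) auto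
    then show ?thesis using False by (simp add: pos_part_def)
  qed
  thus ?thesis by (simp add: u_sp_def)
qed

definition Phi :: "real \<Rightarrow> real \<Rightarrow> real \<Rightarrow> real \<Rightarrow> real \<Rightarrow> real" where
  "Phi K e q c t = K * c powr (-e) * (indicator {0..1} t * t powr (e - 1)) + indicator {1..} t * t powr (-1 - q)"

lemma Phi_nonneg: "0 \<le> K \<Longrightarrow> 0 \<le> Phi K e q c t"
  unfolding Phi_def by (auto simp: indicator_def)

lemma key:
  fixes s p x y :: real
  assumes s: "0 < s" "s < 1" and p: "1 < p" and x: "\<bar>x\<bar> < 1" and xy: "\<bar>x\<bar> \<le> \<bar>y\<bar>"
  shows "\<bar>u_sp s p x - u_sp s p y\<bar> powr p / \<bar>x - y\<bar> powr (1 + s * p)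
          \<le> Phi ((p / (p - 1)) powr p) (min (1/2) (p * (1 - s))) (s * p) (1 - \<bar>x\<bar>) \<bar>x - y\<bar>"
proof -
  define m where "m = p / (p - 1)"
  define e where "e = min (1/2) (p * (1 - s))"
  define a where "a = \<bar>x\<bar>"
  define b where "b = min \<bar>y\<bar> 1"
  define c where "c = 1 - a"
  define D where "D = \<bar>x - y\<bar>"
  define VX where "VX = 1 - a powr m"
  define VY where "VY = 1 - b powr m"
  define \<Delta> where "\<Delta> = VX powr s - VY powr s"
  have m1: "1 \<le> m" using p by (simp add: m_def field_simps)
  have e: "0 < e" "e \<le> p * (1 - s)" "e < 1" using s p by (auto simp: e_def)
  have ab: "0 \<le> a" "a \<le> b" "b \<le> 1" "a < 1" using x xy by (auto simp: a_def b_def)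
  have c: "0 < c" "c \<le> 1" using ab by (auto simp: c_def)
  have ux: "u_sp s p x = VX powr s" using p x by (simp add: u_alt VX_def a_def m_def)
  have uy: "u_sp s p y = VY powr s" using p by (simp add: u_alt VY_def b_def m_def)
  have "a powr m \<le> a" using ab m1 by (cases "a = 0") (auto intro: powr_le_one_le)
  hence VXc: "c \<le> VX" by (simp add: VX_def c_def)
  have "a powr m \<le> b powr m" using ab m1 by (intro powr_mono2) auto
  hence VYX: "VY \<le> VX" by (simp add: VX_def VY_def)
  have "b powr m \<le> 1" using ab m1 by (intro powr_le1) auto
  hence VY0: "0 \<le> VY" by (simp add: VY_def)
  have VX1: "VX \<le> 1" by (simp add: VX_def)
  have VX0: "0 < VX" using VXc c by simp
  have "b - a \<le> D" using ab xy by (simp add: D_def a_def b_def)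
  hence "m * (b - a) \<le> m * D" using m1 by (intro mult_left_mono) auto
  hence d: "VX - VY \<le> m * D" using pow_lip[OF ab(1-3) m1] by (simp add: VX_def VY_def)
  have D0: "0 \<le> D" by (simp add: D_def)
  have Dl0: "0 \<le> \<Delta>" using VYX VY0 s by (simp add: \<Delta>_def powr_mono2)
  have absu: "\<bar>u_sp s p x - u_sp s p y\<bar> = \<Delta>" using Dl0 by (simp add: ux uy \<Delta>_def)
  have B1: "\<Delta> \<le> m * D * c powr (s - 1)"
  proof -
    have "\<Delta> \<le> (VX - VY) * VX powr (s - 1)" unfolding \<Delta>_def using pow_s(1)[OF VY0 VYX VX0 s] .
    also have "\<dots> \<le> (m * D) * c powr (s - 1)"
      using d VYX c VXc s by (intro mult_mono powr_mono2') auto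
    finally show ?thesis .
  qed
  have B2: "\<Delta> \<le> (m * D) powr s"
  proof -
    have "\<Delta> \<le> (VX - VY) powr s" unfolding \<Delta>_def using pow_s(2)[OF VY0 VYX VX0 s] .
    also have "\<dots> \<le> (m * D) powr s" using d VYX s by (intro powr_mono2) auto
    finally show ?thesis .
  qed
  have "VX powr s \<le> 1" using VX1 VX0 s by (intro powr_le1) auto
  hence B3: "\<Delta> \<le> 1" unfolding \<Delta>_def by (smt (verit) powr_ge_zero)
  have K0: "0 \<le> m powr p" by simp
  have goal: "\<Delta> powr p / D powr (1 + s * p) \<le> Phi (m powr p) e (s * p) c D"
  proof (cases "D = 0")
    case True then show ?thesis using Phi_nonneg[OF K0] by simp
  next
    case False
    hence Dp: "0 < D" using D0 by simp
    have m0: "0 < m" using m1 by simp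
    show ?thesis
    proof (cases "D \<le> 1")
      case D1: True
      have Phi1: "m powr p * c powr (-e) * D powr (e - 1) \<le> Phi (m powr p) e (s * p) c D"
        unfolding Phi_def using D1 Dp by (simp add: indicator_def)
      show ?thesis
      proof (cases "D \<le> c")
        case True
        have "\<Delta> powr p / D powr (1 + s * p) \<le> (m * D * c powr (s - 1)) powr p / D powr (1 + s * p)"
          using B1 Dl0 p by (intro divide_right_mono powr_mono2) auto
        also have "\<dots> \<le> m powr p * c powr (-e) * D powr (e - 1)"
        proof -
          have L: "ln D - ln c \<le> 0" using True Dp c by simp
          have "(p * (1 - s) - e) * (ln D - ln c) \<le> 0" using e L by (intro mult_nonneg_nonpos) auto
          hence "p * (ln m + ln D + (s - 1) * ln c) - (1 + s * p) * ln D \<le> p * ln m + (- e) * ln c + (e - 1) * ln D"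
            by (simp add: algebra_simps)
          hence "exp (p * (ln m + ln D + (s - 1) * ln c) - (1 + s * p) * ln D) \<le> exp (p * ln m + (- e) * ln c + (e - 1) * ln D)"
            by simp
          moreover have "(m * D * c powr (s - 1)) powr p = exp (p * (ln m + ln D + (s - 1) * ln c))"
            using Dp c m0 by (simp add: powr_def ln_mult)
          moreover have "D powr (1 + s * p) = exp ((1 + s * p) * ln D)" using Dp by (simp add: powr_def)
          moreover have "m powr p * c powr (-e) * D powr (e - 1) = exp (p * ln m + (- e) * ln c + (e - 1) * ln D)"
            using Dp c m0 by (simp add: powr_def exp_add[symmetric])
          ultimately show ?thesis by (simp add: exp_diff)
        qed
        finally show ?thesis using Phi1 by linarith
      next
        case False
        have "\<Delta> powr p / D powr (1 + s * p) \<le> ((m * D) powr s) powr p / D powr (1 + s * p)"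
          using B2 Dl0 p by (intro divide_right_mono powr_mono2) auto
        also have "\<dots> \<le> m powr p * c powr (-e) * D powr (e - 1)"
        proof -
          have L: "ln D - ln c \<ge> 0" using False Dp c by simp
          have "0 \<le> e * (ln D - ln c)" using e L by simp
          moreover have "(s * p - p) * ln m \<le> 0" using s p m1 by (intro mult_nonpos_nonneg) auto
          ultimately have "s * p * (ln m + ln D) - (1 + s * p) * ln D \<le> p * ln m + (- e) * ln c + (e - 1) * ln D"
            by (simp add: algebra_simps)
          hence "exp (s * p * (ln m + ln D) - (1 + s * p) * ln D) \<le> exp (p * ln m + (- e) * ln c + (e - 1) * ln D)"
            by simp
          moreover have "((m * D) powr s) powr p = exp (s * p * (ln m + ln D))"
            using Dp c m0 by (simp add: powr_powr powr_def ln_mult)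
          moreover have "D powr (1 + s * p) = exp ((1 + s * p) * ln D)" using Dp by (simp add: powr_def)
          moreover have "m powr p * c powr (-e) * D powr (e - 1) = exp (p * ln m + (- e) * ln c + (e - 1) * ln D)"
            using Dp c m0 by (simp add: powr_def exp_add[symmetric])
          ultimately show ?thesis by (simp add: exp_diff)
        qed
        finally show ?thesis using Phi1 by linarith
      qed
    next
      case False
      have "\<Delta> powr p / D powr (1 + s * p) \<le> 1 powr p / D powr (1 + s * p)"
        using B3 Dl0 p by (intro divide_right_mono powr_mono2) auto
      also have "\<dots> = D powr (-1 - s * p)" using Dp by (simp add: powr_minus_divide[symmetric] powr_minus)
      also have "\<dots> \<le> Phi (m powr p) e (s * p) c D"
        unfolding Phi_def using False c by (simp add: indicator_def)
      finally show ?thesis .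
    qed
  qed
  thus ?thesis by (simp add: absu m_def e_def c_def D_def a_def)
qed

lemma nn_transl:
  fixes g :: "real \<Rightarrow> ennreal"
  assumes [measurable]: "g \<in> borel_measurable borel"
  shows "(\<integral>\<^sup>+y. g (x - y) \<partial>lborel) = (\<integral>\<^sup>+t. g t \<partial>lborel)"
  using nn_integral_real_affine[OF assms, of "-1" x] by simp

lemma nn_even:
  fixes g :: "real \<Rightarrow> real"
  assumes [measurable]: "g \<in> borel_measurable borel" and nn: "\<And>t. 0 \<le> g t"
  shows "(\<integral>\<^sup>+t. ennreal (g \<bar>t\<bar>) \<partial>lborel) \<le> 2 * (\<integral>\<^sup>+t. ennreal (g t) \<partial>lborel)"
proof -
  have "(\<integral>\<^sup>+t. ennreal (g \<bar>t\<bar>) \<partial>lborel) \<le> (\<integral>\<^sup>+t. ennreal (g t) + ennreal (g (-t)) \<partial>lborel)"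
    by (intro nn_integral_mono) (auto simp: abs_if)
  also have "\<dots> = (\<integral>\<^sup>+t. ennreal (g t) \<partial>lborel) + (\<integral>\<^sup>+t. ennreal (g (-t)) \<partial>lborel)"
    by (intro nn_integral_add) auto
  also have "(\<integral>\<^sup>+t. ennreal (g (-t)) \<partial>lborel) = (\<integral>\<^sup>+t. ennreal (g t) \<partial>lborel)"
    using nn_integral_real_affine[of "\<lambda>t. ennreal (g t)" "-1" 0] by simp
  finally show ?thesis by (simp add: mult_2)
qed

lemma Phi_measurable [measurable]: "Phi K e q c \<in> borel_measurable borel"
  unfolding Phi_def by measurable

lemma Phi_int:
  fixes K e q c :: real
  assumes K: "0 \<le> K" and c: "0 < c" and e: "0 < e" and q: "0 < q"
  shows "(\<integral>\<^sup>+t. ennreal (Phi K e q c t) \<partial>lborel) = ennreal (K * c powr (-e) * (1 / e) + 1 / q)"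
proof -
  have i1: "(\<integral>\<^sup>+t. ennreal (indicator {0..1} t * t powr (e - 1)) \<partial>lborel) = ennreal (1 / e)"
    using nn_integral_has_integral_lebesgue[OF _ has_integral_powr_from_0[of "e - 1" 1]] e by simp
  have i2: "(\<integral>\<^sup>+t. ennreal (indicator {1..} t * t powr (-1 - q)) \<partial>lborel) = ennreal (1 / q)"
    using nn_integral_has_integral_lebesgue[OF _ has_integral_powr_to_inf[of "-1 - q" 1]] q by simp
  have "(\<integral>\<^sup>+t. ennreal (Phi K e q c t) \<partial>lborel) =
      (\<integral>\<^sup>+t. ennreal (K * c powr (-e)) * ennreal (indicator {0..1} t * t powr (e - 1)) + ennreal (indicator {1..} t * t powr (-1 - q)) \<partial>lborel)"
    unfolding Phi_def using K
    by (intro nn_integral_cong) (simp add: ennreal_plus[symmetric] ennreal_mult[symmetric] del: ennreal_plus)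
  also have "\<dots> = ennreal (K * c powr (-e)) * (\<integral>\<^sup>+t. ennreal (indicator {0..1} t * t powr (e - 1)) \<partial>lborel) + (\<integral>\<^sup>+t. ennreal (indicator {1..} t * t powr (-1 - q)) \<partial>lborel)"
    by (subst nn_integral_add) (auto simp: nn_integral_cmult)
  also have "\<dots> = ennreal (K * c powr (-e)) * ennreal (1 / e) + ennreal (1 / q)" by (simp only: i1 i2)
  also have "\<dots> = ennreal (K * c powr (-e) * (1 / e) + 1 / q)"
    using K e q by (simp add: ennreal_plus[symmetric] ennreal_mult[symmetric] del: ennreal_plus)
  finally show ?thesis .
qed

lemma outer_fin:
  fixes K e q :: real
  assumes K: "0 \<le> K" and e: "0 < e" "e < 1" and q: "0 < q"
  shows "(\<integral>\<^sup>+r. ennreal (indicator {0..<1} r * (2 * (K * (1 - r) powr (-e) * (1 / e) + 1 / q))) \<partial>lborel) < \<infinity>"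
proof -
  have "(\<integral>\<^sup>+r. ennreal (indicator {0..<1} r * (1 - r) powr (-e)) \<partial>lborel)
      = (\<integral>\<^sup>+r. ennreal (indicator {0..<1} (1 - r) * r powr (-e)) \<partial>lborel)"
    using nn_integral_real_affine[of "\<lambda>r. ennreal (indicator {0..<1} r * (1 - r) powr (-e))" "-1" 1] by simp
  also have "\<dots> \<le> (\<integral>\<^sup>+r. ennreal (indicator {0..1} r * r powr (-e)) \<partial>lborel)"
    by (intro nn_integral_mono) (auto simp: indicator_def)
  also have "\<dots> = ennreal (1 / (1 - e))"
    using nn_integral_has_integral_lebesgue[OF _ has_integral_powr_from_0[of "-e" 1]] e by simp
  finally have A: "(\<integral>\<^sup>+r. ennreal (indicator {0..<1} r * (1 - r) powr (-e)) \<partial>lborel) < \<infinity>"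
    using le_less_trans by fastforce
  have E: "(\<integral>\<^sup>+r. indicator {0..<1::real} r \<partial>lborel) = 1"
    by (subst nn_integral_indicator) auto
  have B: "(\<integral>\<^sup>+r. ennreal (indicator {0..<1::real} r) \<partial>lborel) < \<infinity>"
    unfolding ennreal_indicator E by simp
  have "(\<integral>\<^sup>+r. ennreal (indicator {0..<1} r * (2 * (K * (1 - r) powr (-e) * (1 / e) + 1 / q))) \<partial>lborel)
    = (\<integral>\<^sup>+r. ennreal (2 * K / e) * ennreal (indicator {0..<1} r * (1 - r) powr (-e)) + ennreal (2 / q) * ennreal (indicator {0..<1::real} r) \<partial>lborel)"
    using K e q
    by (intro nn_integral_cong) (simp add: ennreal_plus[symmetric] ennreal_mult[symmetric] indicator_def field_simps del: ennreal_plus)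
  also have "\<dots> = ennreal (2 * K / e) * (\<integral>\<^sup>+r. ennreal (indicator {0..<1} r * (1 - r) powr (-e)) \<partial>lborel) + ennreal (2 / q) * (\<integral>\<^sup>+r. ennreal (indicator {0..<1::real} r) \<partial>lborel)"
    by (subst nn_integral_add) (auto simp: nn_integral_cmult)
  also have "\<dots> < \<infinity>" using A B by (simp add: ennreal_mult_less_top)
  finally show ?thesis .
qed

lemma Phi_measurable2 [measurable (raw)]:
  assumes [measurable]: "f \<in> borel_measurable M" "g \<in> borel_measurable M"
  shows "(\<lambda>x. Phi K e q (f x) (g x)) \<in> borel_measurable M"
  unfolding Phi_def by measurable

lemma u_zero: "\<bar>x\<bar> \<ge> 1 \<Longrightarrow> 1 < p \<Longrightarrow> 0 < s \<Longrightarrow> u_sp s p x = 0"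
  by (simp add: u_alt)

lemma u_bounds: "1 < p \<Longrightarrow> 0 < s \<Longrightarrow> 0 \<le> u_sp s p x \<and> u_sp s p x \<le> 1"
proof -
  assume p: "1 < p" and s: "0 < s"
  have "min \<bar>x\<bar> 1 powr (p / (p - 1)) \<le> 1" using p by (intro powr_le1) auto
  moreover have "0 \<le> min \<bar>x\<bar> 1 powr (p / (p - 1))" by simp
  ultimately show ?thesis using p s by (simp add: u_alt powr_le1)
qed

lemma pw:
  fixes s p x y :: real
  assumes s: "0 < s" "s < 1" and p: "1 < p"
  shows "\<bar>u_sp s p x - u_sp s p y\<bar> powr p / \<bar>x - y\<bar> powr (1 + s * p)
     \<le> indicator {-1<..<1} x * Phi ((p / (p - 1)) powr p) (min (1/2) (p * (1 - s))) (s * p) (1 - \<bar>x\<bar>) \<bar>x - y\<bar>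
      + indicator {-1<..<1} y * Phi ((p / (p - 1)) powr p) (min (1/2) (p * (1 - s))) (s * p) (1 - \<bar>y\<bar>) \<bar>y - x\<bar>"
    (is "?f \<le> ?H1 + ?H2")
proof -
  have H1: "0 \<le> ?H1" and H2: "0 \<le> ?H2" by (auto intro!: mult_nonneg_nonneg Phi_nonneg)
  show ?thesis
  proof (cases "\<bar>x\<bar> \<le> \<bar>y\<bar>")
    case True
    show ?thesis
    proof (cases "\<bar>x\<bar> < 1")
      case x: True
      have "?f \<le> ?H1" using key[OF s p x True] x by (simp add: indicator_def abs_less_iff)
      thus ?thesis using H2 by linarith
    next
      case False
      hence "u_sp s p x = 0" "u_sp s p y = 0" using True s p by (auto intro!: u_zero)
      thus ?thesis using H1 H2 by simp
    qed
  next
    case False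
    show ?thesis
    proof (cases "\<bar>y\<bar> < 1")
      case y: True
      have "?f = \<bar>u_sp s p y - u_sp s p x\<bar> powr p / \<bar>y - x\<bar> powr (1 + s * p)"
        by (simp add: abs_minus_commute)
      also have "\<dots> \<le> ?H2" using key[OF s p y] False y by (simp add: indicator_def abs_less_iff)
      finally show ?thesis using H1 by linarith
    next
      case n: False
      hence "u_sp s p x = 0" "u_sp s p y = 0" using False s p by (auto intro!: u_zero)
      thus ?thesis using H1 H2 by simp
    qed
  qed
qed

theorem proposition4p1:
  fixes s p :: real
  assumes "0 < s" "s < 1" "1 < p"
  shows "in_Wsp s p (u_sp s p)"
proof -
  note s = assms(1,2) and p = assms(3)
  define K where "K = (p / (p - 1)) powr p"
  define e where "e = min (1/2) (p * (1 - s))"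
  define q where "q = s * p"
  define H where "H = (\<lambda>x y. indicator {-1<..<1} x * Phi K e q (1 - \<bar>x\<bar>) \<bar>x - y\<bar>)"
  define G where "G = (\<lambda>r::real. indicator {0..<1} r * (2 * (K * (1 - r) powr (-e) * (1 / e) + 1 / q)))"
  have K: "0 \<le> K" by (simp add: K_def)
  have e: "0 < e" "e < 1" using s p by (auto simp: e_def)
  have q: "0 < q" using s p by (simp add: q_def)
  have Hnn: "0 \<le> H x y" for x y unfolding H_def using K by (auto intro!: mult_nonneg_nonneg Phi_nonneg)
  have Gnn: "0 \<le> G r" for r unfolding G_def using K e q by (auto simp: indicator_def)
  have [measurable]: "(\<lambda>(x, y). H x y) \<in> borel_measurable (lborel \<Otimes>\<^sub>M lborel)"
    unfolding H_def by measurable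
  have [measurable]: "G \<in> borel_measurable borel" unfolding G_def by measurable
  have meas: "u_sp s p \<in> borel_measurable lborel"
    unfolding u_sp_def pos_part_def by measurable
  have int: "integrable lborel (\<lambda>x. \<bar>u_sp s p x\<bar> powr p)"
  proof (rule Bochner_Integration.integrable_bound[where f = "indicator {-1..1} :: real \<Rightarrow> real"])
    show "integrable lborel (indicator {-1..1} :: real \<Rightarrow> real)" by simp
    show "(\<lambda>x. \<bar>u_sp s p x\<bar> powr p) \<in> borel_measurable lborel" using meas by measurable
    show "AE x in lborel. norm (\<bar>u_sp s p x\<bar> powr p) \<le> norm (indicator {-1..1} x :: real)"
    proof (intro AE_I2)
      fix x :: real
      show "norm (\<bar>u_sp s p x\<bar> powr p) \<le> norm (indicator {-1..1} x :: real)"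
      proof (cases "\<bar>x\<bar> \<le> 1")
        case True
        have "\<bar>u_sp s p x\<bar> powr p \<le> 1" using u_bounds[OF p s(1), of x] p by (intro powr_le1) auto
        thus ?thesis using True by (simp add: indicator_def abs_le_iff)
      next
        case False
        thus ?thesis using u_zero[of x p s] s p by (simp add: indicator_def)
      qed
    qed
  qed
  have inner: "(\<integral>\<^sup>+y. ennreal (H x y) \<partial>lborel) \<le> ennreal (G \<bar>x\<bar>)" for x
  proof (cases "\<bar>x\<bar> < 1")
    case True
    define c where "c = 1 - \<bar>x\<bar>"
    have c: "0 < c" using True by (simp add: c_def)
    have "(\<integral>\<^sup>+y. ennreal (H x y) \<partial>lborel) = (\<integral>\<^sup>+y. ennreal (Phi K e q c \<bar>x - y\<bar>) \<partial>lborel)"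
      using True by (simp add: H_def c_def indicator_def abs_less_iff)
    also have "\<dots> = (\<integral>\<^sup>+t. ennreal (Phi K e q c \<bar>t\<bar>) \<partial>lborel)"
      by (rule nn_transl[where g = "\<lambda>t. ennreal (Phi K e q c \<bar>t\<bar>)"]) measurable
    also have "\<dots> \<le> 2 * (\<integral>\<^sup>+t. ennreal (Phi K e q c t) \<partial>lborel)"
      by (rule nn_even) (use K in \<open>auto intro: Phi_nonneg\<close>)
    also have "\<dots> = 2 * ennreal (K * c powr (-e) * (1 / e) + 1 / q)"
      using Phi_int[OF K c e(1) q] by simp
    also have "\<dots> = ennreal (2 * (K * c powr (-e) * (1 / e) + 1 / q))"
      using K e q c by (subst ennreal_mult) auto
    also have "\<dots> = ennreal (G \<bar>x\<bar>)"
      using True by (simp add: G_def c_def indicator_def)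
    finally show ?thesis .
  next
    case False
    hence "H x y = 0" for y by (auto simp: H_def indicator_def abs_less_iff)
    thus ?thesis by simp
  qed
  have I1: "(\<integral>\<^sup>+x. (\<integral>\<^sup>+y. ennreal (H x y) \<partial>lborel) \<partial>lborel) < \<infinity>"
  proof -
    have "(\<integral>\<^sup>+x. (\<integral>\<^sup>+y. ennreal (H x y) \<partial>lborel) \<partial>lborel) \<le> (\<integral>\<^sup>+x. ennreal (G \<bar>x\<bar>) \<partial>lborel)"
      by (intro nn_integral_mono inner)
    also have "\<dots> \<le> 2 * (\<integral>\<^sup>+r. ennreal (G r) \<partial>lborel)"
      by (rule nn_even) (auto intro: Gnn)
    also have "\<dots> < \<infinity>" using outer_fin[OF K e q] unfolding G_def
      by (simp add: ennreal_mult_less_top)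
    finally show ?thesis .
  qed
  have I2: "(\<integral>\<^sup>+x. (\<integral>\<^sup>+y. ennreal (H y x) \<partial>lborel) \<partial>lborel) = (\<integral>\<^sup>+x. (\<integral>\<^sup>+y. ennreal (H x y) \<partial>lborel) \<partial>lborel)"
    by (rule lborel_pair.Fubini'[symmetric]) measurable
  have "(\<integral>\<^sup>+ x. (\<integral>\<^sup>+ y. ennreal (\<bar>u_sp s p x - u_sp s p y\<bar> powr p / \<bar>x - y\<bar> powr (1 + s * p)) \<partial>lborel) \<partial>lborel)
      \<le> (\<integral>\<^sup>+x. (\<integral>\<^sup>+y. ennreal (H x y) + ennreal (H y x) \<partial>lborel) \<partial>lborel)"
  proof (intro nn_integral_mono)
    fix x y :: real
    have "\<bar>u_sp s p x - u_sp s p y\<bar> powr p / \<bar>x - y\<bar> powr (1 + s * p) \<le> H x y + H y x"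
      using pw[OF s p, of x y] by (simp add: H_def K_def e_def q_def)
    thus "ennreal (\<bar>u_sp s p x - u_sp s p y\<bar> powr p / \<bar>x - y\<bar> powr (1 + s * p)) \<le> ennreal (H x y) + ennreal (H y x)"
      using Hnn by (simp add: ennreal_plus[symmetric] del: ennreal_plus)
  qed
  also have "\<dots> = (\<integral>\<^sup>+x. (\<integral>\<^sup>+y. ennreal (H x y) \<partial>lborel) + (\<integral>\<^sup>+y. ennreal (H y x) \<partial>lborel) \<partial>lborel)"
    by (intro nn_integral_cong nn_integral_add) measurable
  also have "\<dots> = (\<integral>\<^sup>+x. (\<integral>\<^sup>+y. ennreal (H x y) \<partial>lborel) \<partial>lborel) + (\<integral>\<^sup>+x. (\<integral>\<^sup>+y. ennreal (H y x) \<partial>lborel) \<partial>lborel)"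
    by (intro nn_integral_add) measurable
  also have "\<dots> < \<infinity>" using I1 I2 by simp
  finally show ?thesis unfolding in_Wsp_def using meas int by simp
qed

end
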